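(* Let $G$ be a graph of order $n$ with fair domination number $\gamma_f(G)$. Then $\mathcal{C}_f(G)\leq n-\gamma_f(G)+2$.
   Context: All graphs are finite and simple; $G=(V,E)$, $N(v)$ is the open neighborhood of $v$. A dominating set is $D\subseteq V$ such that every vertex of $V\setminus D$ has a neighbor in $D$. For an integer $k\geq 1$, a $k$-fair dominating set is a dominating set $D$ such that $|N(v)\cap D|=k$ for every $v\in V\setminus D$. A fair dominating set is a $k$-fair dominating set for some integer $k\geq 1$. The fair domination number $\gamma_f(G)$ is the minimum cardinality of a fair dominating set of $G$ if $G$ has an edge, and $\gamma_f(\overline{K_n})=n$ by convention. A fair coalition consists of two disjoint sets $A_1,A_2\subseteq V$, neither of which is a fair dominating set, such that $A_1\cup A_2$ is a fair dominating set. A fair coalition partition ($fc$-partition) of $G$ is a partition $\Upsilon=\{A_1,\dots,A_k\}$ of $V$ such that every $A_i$ is either a singleton fair dominating set of $G$, or is not a fair dominating set and forms a fair coalition with some other non-fair-dominating set $A_j\in\Upsilon$. The fair coalition number $\mathcal{C}_f(G)$ is the maximum number of parts of an $fc$-partition of $G$. *)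

theory Defs
  imports Main
begin

definition graph :: "'a set \<Rightarrow> ('a \<Rightarrow> 'a \<Rightarrow> bool) \<Rightarrow> bool" where
  "graph V E \<longleftrightarrow> finite V \<and> (\<forall>u v. E u v \<longrightarrow> u \<in> V \<and> v \<in> V)
     \<and> (\<forall>u v. E u v \<longrightarrow> E v u) \<and> (\<forall>v. \<not> E v v)"

definition nbhd :: "'a set \<Rightarrow> ('a \<Rightarrow> 'a \<Rightarrow> bool) \<Rightarrow> 'a \<Rightarrow> 'a set" where
  "nbhd V E v = {u \<in> V. E v u}"

definition dominating :: "'a set \<Rightarrow> ('a \<Rightarrow> 'a \<Rightarrow> bool) \<Rightarrow> 'a set \<Rightarrow> bool" where
  "dominating V E D \<longleftrightarrow> D \<subseteq> V \<and> (\<forall>v \<in> V - D. \<exists>u \<in> D. E v u)"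

definition k_fair_dom :: "'a set \<Rightarrow> ('a \<Rightarrow> 'a \<Rightarrow> bool) \<Rightarrow> nat \<Rightarrow> 'a set \<Rightarrow> bool" where
  "k_fair_dom V E k D \<longleftrightarrow> dominating V E D \<and> (\<forall>v \<in> V - D. card (nbhd V E v \<inter> D) = k)"

definition fair_dom :: "'a set \<Rightarrow> ('a \<Rightarrow> 'a \<Rightarrow> bool) \<Rightarrow> 'a set \<Rightarrow> bool" where
  "fair_dom V E D \<longleftrightarrow> (\<exists>k \<ge> 1. k_fair_dom V E k D)"

definition fair_domination_number :: "'a set \<Rightarrow> ('a \<Rightarrow> 'a \<Rightarrow> bool) \<Rightarrow> nat" where
  "fair_domination_number V E =
     (if \<exists>u \<in> V. \<exists>v \<in> V. E u v then Min {card D | D. fair_dom V E D} else card V)"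

definition fair_coalition :: "'a set \<Rightarrow> ('a \<Rightarrow> 'a \<Rightarrow> bool) \<Rightarrow> 'a set \<Rightarrow> 'a set \<Rightarrow> bool" where
  "fair_coalition V E A1 A2 \<longleftrightarrow> A1 \<subseteq> V \<and> A2 \<subseteq> V \<and> A1 \<inter> A2 = {}
     \<and> \<not> fair_dom V E A1 \<and> \<not> fair_dom V E A2 \<and> fair_dom V E (A1 \<union> A2)"

definition is_partition :: "'a set \<Rightarrow> 'a set set \<Rightarrow> bool" where
  "is_partition V P \<longleftrightarrow> \<Union>P = V \<and> (\<forall>A \<in> P. A \<noteq> {})
     \<and> (\<forall>A \<in> P. \<forall>B \<in> P. A \<noteq> B \<longrightarrow> A \<inter> B = {})"

definition fc_partition :: "'a set \<Rightarrow> ('a \<Rightarrow> 'a \<Rightarrow> bool) \<Rightarrow> 'a set set \<Rightarrow> bool" where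
  "fc_partition V E P \<longleftrightarrow> is_partition V P \<and>
     (\<forall>A \<in> P. (card A = 1 \<and> fair_dom V E A) \<or>
              (\<not> fair_dom V E A \<and> (\<exists>B \<in> P. B \<noteq> A \<and> fair_coalition V E A B)))"

text \<open>Maximum number of parts of an fc-partition (Sup of nat; 0 if none exists).\<close>
definition fair_coalition_number :: "'a set \<Rightarrow> ('a \<Rightarrow> 'a \<Rightarrow> bool) \<Rightarrow> nat" where
  "fair_coalition_number V E = Sup {card P | P. fc_partition V E P}"

end

theory Submission
  imports Defs
begin

lemma part_card_le:
  assumes "finite S" "\<Union>P \<subseteq> S" "\<forall>A \<in> P. A \<noteq> {}"
    "\<forall>A \<in> P. \<forall>B \<in> P. A \<noteq> B \<longrightarrow> A \<inter> B = {}"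
  shows "card P \<le> card S - card (S - \<Union>P)"
proof -
  have finP: "finite P" using assms(1,2)
    by (meson Sup_le_iff finite_Pow_iff finite_subset subsetI PowI)
  have fin: "\<And>A. A \<in> P \<Longrightarrow> finite A" using assms(1,2) by (meson Sup_le_iff finite_subset)
  have "card (\<Union>P) = sum card P"
    by (rule card_Union_disjoint) (use assms(4) fin in \<open>auto simp: pairwise_def disjnt_def\<close>)
  moreover have "sum (\<lambda>_. 1::nat) P \<le> sum card P"
    by (rule sum_mono) (use assms(3) fin in \<open>auto simp: Suc_le_eq card_gt_0_iff\<close>)
  moreover have "card S = card (\<Union>P) + card (S - \<Union>P)"
    using assms(1,2) by (metis card_Diff_subset card_mono diff_add_inverse finite_subset le_add_diff_inverse)
  ultimately show ?thesis by simp
qed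

lemma part_card_le2:
  assumes "finite S" "\<Union>P \<subseteq> S" "\<forall>A \<in> P. A \<noteq> {}"
    "\<forall>A \<in> P. \<forall>B \<in> P. A \<noteq> B \<longrightarrow> A \<inter> B = {}"
  shows "card P \<le> card S"
  using part_card_le[OF assms] by simp

lemma fair_dom_V:
  assumes "graph V E" shows "fair_dom V E V"
  unfolding fair_dom_def k_fair_dom_def dominating_def by (rule exI[of _ 1]) auto

lemma fair_dom_sub: "fair_dom V E D \<Longrightarrow> D \<subseteq> V"
  unfolding fair_dom_def k_fair_dom_def dominating_def by auto

lemma gamma_le:
  assumes g: "graph V E" and D: "fair_dom V E D"
  shows "fair_domination_number V E \<le> card D"
proof (cases "\<exists>u \<in> V. \<exists>v \<in> V. E u v")
  case True
  have fin: "finite {card D | D. fair_dom V E D}"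
  proof -
    have "{card D | D. fair_dom V E D} \<subseteq> card ` Pow V" using fair_dom_sub by blast
    moreover have "finite V" using g by (simp add: graph_def)
    ultimately show ?thesis by (meson finite_Pow_iff finite_imageI finite_subset)
  qed
  have "card D \<in> {card D | D. fair_dom V E D}" using D by blast
  then show ?thesis using True fin by (simp add: fair_domination_number_def)
next
  case False
  have "V - D = {}"
  proof
    show "V - D \<subseteq> {}"
    proof
      fix v assume v: "v \<in> V - D"
      from D obtain u where "u \<in> D" "E v u"
        using v unfolding fair_dom_def k_fair_dom_def dominating_def by blast
      moreover have "D \<subseteq> V" using D fair_dom_sub by blast
      ultimately show "v \<in> {}" using False v by blast
    qed
  qed simp
  then have "V = D" using fair_dom_sub[OF D] by blast
  then show ?thesis using False by (simp add: fair_domination_number_def)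
qed

lemma gamma_le_n:
  assumes g: "graph V E"
  shows "fair_domination_number V E \<le> card V"
  using gamma_le[OF g fair_dom_V[OF g]] .

lemma fc_bound:
  assumes g: "graph V E" and P: "fc_partition V E P"
  shows "card P \<le> card V - fair_domination_number V E + 2"
proof -
  have finV: "finite V" using g by (simp add: graph_def)
  have ip: "is_partition V P" using P by (simp add: fc_partition_def)
  hence U: "\<Union>P = V" and ne: "\<forall>A \<in> P. A \<noteq> {}"
    and dj: "\<forall>A \<in> P. \<forall>B \<in> P. A \<noteq> B \<longrightarrow> A \<inter> B = {}" by (auto simp: is_partition_def)
  have kn: "card P \<le> card V" using part_card_le2[OF finV _ ne dj] U by simp
  have gn: "fair_domination_number V E \<le> card V" using gamma_le_n[OF g] .
  show ?thesis
  proof (cases "P = {}")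
    case True then show ?thesis by simp
  next
    case False
    then obtain A where A: "A \<in> P" by blast
    from P A have "(card A = 1 \<and> fair_dom V E A) \<or>
              (\<not> fair_dom V E A \<and> (\<exists>B \<in> P. B \<noteq> A \<and> fair_coalition V E A B))"
      by (simp add: fc_partition_def)
    then show ?thesis
    proof
      assume "card A = 1 \<and> fair_dom V E A"
      then have "fair_domination_number V E \<le> 1" using gamma_le[OF g] by metis
      then show ?thesis using kn by linarith
    next
      assume "\<not> fair_dom V E A \<and> (\<exists>B \<in> P. B \<noteq> A \<and> fair_coalition V E A B)"
      then obtain B where B: "B \<in> P" "B \<noteq> A" "fair_dom V E (A \<union> B)"
        by (auto simp: fair_coalition_def)
      have gab: "fair_domination_number V E \<le> card (A \<union> B)" using gamma_le[OF g B(3)] .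
      let ?Q = "P - {A, B}"
      have UQ: "\<Union>?Q \<subseteq> V - (A \<union> B)" using U dj A B by blast
      have "card ?Q \<le> card (V - (A \<union> B))"
        using part_card_le2[OF _ UQ] ne dj finV by auto
      moreover have "card (V - (A \<union> B)) = card V - card (A \<union> B)"
        using U A B finV by (metis Sup_upper card_Diff_subset finite_subset le_sup_iff)
      moreover have "card ?Q = card P - 2"
        using A B finV part_card_le2 by (simp add: card_Diff_subset)
      moreover have "card P \<ge> 2"
      proof -
        have "finite P" using finV U by (metis finite_UnionD)
        then have "card {A, B} \<le> card P" using A B by (intro card_mono) auto
        then show ?thesis using B by simp
      qed
      moreover have "card (A \<union> B) \<le> card V"
        using U A B finV by (metis Sup_upper card_mono le_sup_iff)
      ultimately show ?thesis using gab by linarith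
    qed
  qed
qed

theorem theorem2p7:
  fixes V :: "'a set" and E :: "'a \<Rightarrow> 'a \<Rightarrow> bool"
  assumes "graph V E"
  shows "fair_coalition_number V E \<le> card V - fair_domination_number V E + 2"
proof -
  let ?X = "{card P | P. fc_partition V E P}"
  show ?thesis
  proof (cases "?X = {}")
    case True then show ?thesis by (simp add: fair_coalition_number_def)
  next
    case False
    have "Sup ?X \<le> card V - fair_domination_number V E + 2"
      by (rule cSup_least[OF False]) (use fc_bound[OF assms] in blast)
    then show ?thesis by (simp add: fair_coalition_number_def)
  qed
qed

end
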